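(* Let $G=(V,E)$ be a $k$-edge-connected graph ($k>0$) and $\phi^*>0$. Suppose every induced subgraph $G[S]$ with $|S|\ge 2$ that is $k/20$-edge-connected and $1/4$-dense in $G$ satisfies $\phi(G[S])<\phi^*$. Then for every nonempty $U\subseteq V$, $$\log_2|U|\ \ge\ \frac{3/10-\phi_G(U)}{2\phi^*}.$$
   Context: Graphs are finite, undirected, unweighted, loopless, possibly with parallel edges; $k$-edge-connected means every cut $(S,\overline S)$, $\emptyset\ne S\subsetneq V$, has at least $k$ edges. For a graph $H$ and $S\subseteq V(H)$: $\partial_H(S)$ is the number of edges leaving $S$, $d_H(S)$ the sum of $H$-degrees of vertices in $S$, $\phi_H(S)=\partial_H(S)/d_H(S)$, and $\phi(H)=\min_{\emptyset\ne S\subsetneq V(H)}\partial_H(S)/\min\{d_H(S),d_H(V(H)\setminus S)\}$. An induced subgraph $H$ of $G$ is $\lambda$-dense if $d_H(v)\ge\lambda\,d_G(v)$ for every vertex $v$ of $H$. *)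

theory Defs
  imports Complex_Main
begin

text \<open>A finite loopless multigraph is given by a finite vertex set V and a
  symmetric edge-multiplicity function m (number of parallel edges between u and v).\<close>

definition multigraph :: "'a set \<Rightarrow> ('a \<Rightarrow> 'a \<Rightarrow> nat) \<Rightarrow> bool" where
  "multigraph V m \<longleftrightarrow> finite V \<and> (\<forall>u v. m u v = m v u) \<and> (\<forall>v. m v v = 0)
     \<and> (\<forall>u v. m u v \<noteq> 0 \<longrightarrow> u \<in> V \<and> v \<in> V)"

definition deg :: "'a set \<Rightarrow> ('a \<Rightarrow> 'a \<Rightarrow> nat) \<Rightarrow> 'a \<Rightarrow> nat" where
  "deg V m v = (\<Sum>u\<in>V. m v u)"

definition vol :: "'a set \<Rightarrow> ('a \<Rightarrow> 'a \<Rightarrow> nat) \<Rightarrow> 'a set \<Rightarrow> nat" where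
  "vol V m S = (\<Sum>v\<in>S. deg V m v)"

definition boundary :: "'a set \<Rightarrow> ('a \<Rightarrow> 'a \<Rightarrow> nat) \<Rightarrow> 'a set \<Rightarrow> nat" where
  "boundary V m S = (\<Sum>u\<in>S. \<Sum>w\<in>V - S. m u w)"

definition edge_connected :: "'a set \<Rightarrow> ('a \<Rightarrow> 'a \<Rightarrow> nat) \<Rightarrow> real \<Rightarrow> bool" where
  "edge_connected V m k \<longleftrightarrow>
     (\<forall>S. S \<noteq> {} \<and> S \<subset> V \<longrightarrow> real (boundary V m S) \<ge> k)"

definition cond_set :: "'a set \<Rightarrow> ('a \<Rightarrow> 'a \<Rightarrow> nat) \<Rightarrow> 'a set \<Rightarrow> real" where
  "cond_set V m S = real (boundary V m S) / real (vol V m S)"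

definition conductance :: "'a set \<Rightarrow> ('a \<Rightarrow> 'a \<Rightarrow> nat) \<Rightarrow> real" where
  "conductance V m = Min ((\<lambda>S. real (boundary V m S) /
       real (min (vol V m S) (vol V m (V - S)))) ` {S. S \<noteq> {} \<and> S \<subset> V})"

text \<open>Induced subgraph G[S] (vertex set S, multiplicities restricted) is \<lambda>-dense in G.\<close>
definition dense :: "'a set \<Rightarrow> ('a \<Rightarrow> 'a \<Rightarrow> nat) \<Rightarrow> 'a set \<Rightarrow> real \<Rightarrow> bool" where
  "dense V m S l \<longleftrightarrow> (\<forall>v\<in>S. real (deg S m v) \<ge> l * real (deg V m v))"

end

theory Submission
  imports Defs
begin

lemma bnd_split:
  assumes fin: "finite V" and sym: "\<And>u v. m u v = m v u" and SU: "S \<subseteq> U" and UV: "U \<subseteq> V"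
  shows "boundary V m S + boundary V m (U - S) = boundary V m U + 2 * boundary U m S"
proof -
  have fU: "finite U" using fin UV finite_subset by blast
  have fS: "finite S" using fU SU finite_subset by blast
  define a where "a = (\<Sum>u\<in>S. \<Sum>w\<in>V - U. m u w)"
  define b where "b = (\<Sum>u\<in>U - S. \<Sum>w\<in>V - U. m u w)"
  define c where "c = (\<Sum>u\<in>S. \<Sum>w\<in>U - S. m u w)"
  have e1: "V - S = (V - U) \<union> (U - S)" using SU UV by blast
  have "boundary V m S = a + c"
    unfolding boundary_def a_def c_def e1
    by (subst sum.union_disjoint) (use fin fU in \<open>auto simp: sum.distrib\<close>)
  moreover have e2: "V - (U - S) = (V - U) \<union> S" using SU UV by blast
  have "(\<Sum>u\<in>U - S. \<Sum>w\<in>S. m u w) = c"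
    unfolding c_def by (subst sum.swap) (simp add: sym)
  hence "boundary V m (U - S) = b + c"
    unfolding boundary_def b_def e2
    by (subst sum.union_disjoint) (use fin fU fS SU in \<open>auto simp: sum.distrib\<close>)
  moreover have "boundary V m U = a + b"
  proof -
    have "U = S \<union> (U - S)" using SU by blast
    hence "boundary V m U = (\<Sum>u\<in>S \<union> (U - S). \<Sum>w\<in>V - U. m u w)" unfolding boundary_def by simp
    also have "\<dots> = a + b" unfolding a_def b_def
      by (rule sum.union_disjoint) (use fU fS in auto)
    finally show ?thesis .
  qed
  moreover have "boundary U m S = c" unfolding boundary_def c_def by simp
  ultimately show ?thesis by simp
qed

lemma bnd_remove:
  assumes fin: "finite V" and sym: "\<And>u v. m u v = m v u" and loop: "\<And>v. m v v = 0"
    and vU: "v \<in> U" and UV: "U \<subseteq> V"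
  shows "boundary V m (U - {v}) + deg V m v = boundary V m U + 2 * deg U m v"
proof -
  have fU: "finite U" using fin UV finite_subset by blast
  have "boundary V m (U - {v}) + boundary V m {v} = boundary V m U + 2 * boundary U m (U - {v})"
    using bnd_split[OF fin, of m "U - {v}" U] sym vU UV
    by (metis Diff_cancel Diff_insert_absorb Diff_subset Set.set_insert double_diff empty_subsetI insert_subset subset_refl)
  moreover have "boundary V m {v} = deg V m v"
  proof -
    have vV: "v \<in> V" using vU UV by blast
    have "deg V m v = m v v + (\<Sum>w\<in>V - {v}. m v w)" unfolding deg_def
      by (rule sum.remove[OF fin vV])
    thus ?thesis unfolding boundary_def using loop by simp
  qed
  moreover have "boundary U m (U - {v}) = deg U m v"
  proof -
    have e: "U - (U - {v}) = {v}" using vU by blast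
    have "boundary U m (U - {v}) = (\<Sum>u\<in>U - {v}. m u v)" unfolding boundary_def e by simp
    also have "\<dots> = (\<Sum>u\<in>U - {v}. m v u)" using sym by simp
    also have "\<dots> = (\<Sum>u\<in>U. m v u)" using sum.remove[OF fU vU, of "\<lambda>u. m v u"] loop by simp
    finally show ?thesis unfolding deg_def .
  qed
  ultimately show ?thesis by simp
qed

lemma vol_split:
  assumes "finite U" "S \<subseteq> U"
  shows "vol V m U = vol V m S + vol V m (U - S)"
  unfolding vol_def using assms by (metis sum.subset_diff add.commute)

lemma deg_mono:
  assumes "finite V" "U \<subseteq> V"
  shows "deg U m v \<le> deg V m v"
  unfolding deg_def using assms by (intro sum_mono2) auto

lemma vol_mono:
  assumes "finite V" "U \<subseteq> V"
  shows "vol U m S \<le> vol V m S"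
  unfolding vol_def using deg_mono[OF assms] by (intro sum_mono) auto

lemma log_lemma:
  fixes x y :: nat and d1 d2 :: real
  assumes "x > 0" "y > 0" "d1 > 0" "d2 > 0"
  shows "d1 * (log 2 x - log 2 (x + y)) + d2 * (log 2 y - log 2 (x + y)) \<le> - min d1 d2"
proof -
  have L: "log 2 a - log 2 (a + b) \<le> -1" if "a > 0" "b > 0" "a \<le> b" for a b :: nat
  proof -
    have "2 * real a \<le> real (a + b)" using that by simp
    hence "log 2 (2 * real a) \<le> log 2 (real (a+b))" using that by (subst log_le_cancel_iff) auto
    moreover have "log 2 (2 * real a) = 1 + log 2 a" using that by (simp add: log_mult)
    ultimately show ?thesis by simp
  qed
  have N: "log 2 a - log 2 (a + b) \<le> 0" if "a > 0" for a b :: nat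
    using that by simp
  show ?thesis
  proof (cases "x \<le> y")
    case True
    have "d1 * (log 2 x - log 2 (x + y)) \<le> d1 * (-1)" using L[of x y] True assms
      by (intro mult_left_mono) auto
    moreover have "d2 * (log 2 y - log 2 (x + y)) \<le> 0" using N[of y x] assms
      by (intro mult_nonneg_nonpos) (auto simp: add.commute)
    ultimately show ?thesis by linarith
  next
    case False
    have "d2 * (log 2 y - log 2 (x + y)) \<le> d2 * (-1)" using L[of y x] False assms
      by (intro mult_left_mono) (auto simp: add.commute)
    moreover have "d1 * (log 2 x - log 2 (x + y)) \<le> 0" using N[of x y] assms
      by (intro mult_nonneg_nonpos) auto
    ultimately show ?thesis by linarith
  qed
qed


theorem mainTheorem10:
  fixes V :: "'a set" and m :: "'a \<Rightarrow> 'a \<Rightarrow> nat" and k :: nat and phistar :: real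
  assumes "multigraph V m"
    and "card V \<ge> 2"
    and "k > 0"
    and "edge_connected V m (real k)"
    and "phistar > 0"
    and "\<forall>S. S \<subseteq> V \<and> card S \<ge> 2 \<and> edge_connected S m (real k / 20) \<and> dense V m S (1/4)
            \<longrightarrow> conductance S m < phistar"
  shows "\<forall>U. U \<noteq> {} \<and> U \<subseteq> V \<longrightarrow>
           log 2 (real (card U)) \<ge> (3/10 - cond_set V m U) / (2 * phistar)"
proof -
  note mg = assms(1)
  have fin: "finite V" and sym: "\<And>u v. m u v = m v u" and loop: "\<And>v. m v v = 0"
    using mg unfolding multigraph_def by auto
  have bsing: "boundary V m {v} = deg V m v" if "v \<in> V" for v
  proof -
    have "boundary V m ({v} - {v}) + deg V m v = boundary V m {v} + 2 * deg {v} m v"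
      by (rule bnd_remove[OF fin sym loop]) (use that in auto)
    moreover have "deg {v} m v = 0" unfolding deg_def using loop by simp
    moreover have "boundary V m {} = 0" unfolding boundary_def by simp
    ultimately show ?thesis by simp
  qed
  have degk: "real k \<le> real (deg V m v)" if "v \<in> V" for v
  proof -
    have "V \<noteq> {v}" using assms(2) by auto
    hence "{v} \<noteq> {} \<and> {v} \<subset> V" using that by auto
    hence "real (boundary V m {v}) \<ge> real k" using assms(4) unfolding edge_connected_def by blast
    thus ?thesis using bsing[OF that] by simp
  qed
  have degpos: "real (deg V m v) > 0" if "v \<in> V" for v
    using degk[OF that] assms(3) by linarith
  have volpos: "real (vol V m X) > 0" if XX: "X \<noteq> {}" "X \<subseteq> V" for X
  proof -
    obtain v where v: "v \<in> X" using XX by auto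
    have fX: "finite X" using fin XX finite_subset by blast
    have "deg V m v \<le> vol V m X" unfolding vol_def
      using member_le_sum[OF v, of "deg V m"] fX by simp
    moreover have "real (deg V m v) > 0" using degpos[of v] v XX by auto
    ultimately show ?thesis by linarith
  qed
  define F where "F X = 2 * phistar * log 2 (real (card X))
      + (real (boundary V m X) - real k / 10) / real (vol V m X)" for X
  define C where "C = {X. X \<noteq> {} \<and> X \<subseteq> V}"
  have finC: "finite C" unfolding C_def using fin by (auto intro: finite_subset[of _ "Pow V"])
  have VC: "V \<in> C" unfolding C_def using assms(2) by auto
  obtain U0 where U0C: "U0 \<in> C" and U0min: "\<And>X. X \<in> C \<Longrightarrow> F U0 \<le> F X"
  proof -
    have "Min (F ` C) \<in> F ` C" using finC VC by (intro Min_in) auto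
    then obtain U0 where "U0 \<in> C" "F U0 = Min (F ` C)" by auto
    thus ?thesis using that finC by (metis Min_le finite_imageI image_eqI)
  qed
  have U0ne: "U0 \<noteq> {}" and U0V: "U0 \<subseteq> V" using U0C unfolding C_def by auto
  have finU0: "finite U0" using fin U0V finite_subset by blast
  have key: "F U0 \<ge> 3/10"
  proof (rule ccontr)
    assume "\<not> F U0 \<ge> 3/10"
    hence Flt: "F U0 < 3/10" by simp
    define D where "D = real (vol V m U0)"
    have Dpos: "D > 0" unfolding D_def using volpos U0ne U0V by blast
    have cpos: "card U0 \<ge> 1" using U0ne finU0 by (simp add: Suc_leI card_gt_0_iff)
    have lg0: "log 2 (real (card U0)) \<ge> 0" using cpos by simp
    have P0: "(real (boundary V m U0) - real k / 10) / D < 3/10"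
      using Flt lg0 assms(5) unfolding F_def D_def
      by (smt (verit) mult_nonneg_nonneg)
    have c2: "card U0 \<ge> 2"
    proof (rule ccontr)
      assume "\<not> card U0 \<ge> 2"
      hence "card U0 = 1" using cpos by simp
      then obtain v where U0v: "U0 = {v}" by (metis card_1_singletonE)
      have vV: "v \<in> V" using U0v U0V by auto
      have Dv: "D = real (deg V m v)" unfolding D_def U0v vol_def by simp
      moreover have "real (boundary V m U0) = real (deg V m v)" using bsing[OF vV] U0v by simp
      ultimately have "(real (boundary V m U0) - real k / 10) / D = (D - real k/10) / D" using Dv by simp
      also have "\<dots> \<ge> 9/10" using degk[OF vV] Dv Dpos by (simp add: le_divide_eq)
      finally show False using P0 by simp
    qed
    have cut: False if Sne: "S \<noteq> {}" and SU: "S \<subset> U0"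
      and small: "real (boundary U0 m S) < real k / 20 + phistar * min (real (vol V m S)) (real (vol V m (U0 - S)))" for S
    proof -
      define S' where "S' = U0 - S"
      have S'ne: "S' \<noteq> {}" using SU unfolding S'_def by auto
      have SC: "S \<in> C" and S'C: "S' \<in> C" using Sne S'ne SU U0V unfolding C_def S'_def by auto
      define d1 where "d1 = real (vol V m S)"
      define d2 where "d2 = real (vol V m S')"
      have d1p: "d1 > 0" unfolding d1_def using volpos Sne SU U0V by auto
      have d2p: "d2 > 0" unfolding d2_def using volpos[OF S'ne] U0V unfolding S'_def by auto
      have Dsum: "D = d1 + d2" unfolding D_def d1_def d2_def S'_def
        using vol_split[OF finU0, of S V m] SU by simp
      have bsn: "boundary V m S + boundary V m S' = boundary V m U0 + 2 * boundary U0 m S"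
        unfolding S'_def using bnd_split[OF fin sym, of S U0] SU U0V by auto
      have bs: "real (boundary V m S) + real (boundary V m S') = real (boundary V m U0) + 2 * real (boundary U0 m S)"
        using arg_cong[OF bsn, of real] by simp
      have fS: "finite S" using finU0 SU finite_subset by blast
      have cardsum: "card U0 = card S + card S'" unfolding S'_def using SU fS finU0
        by (metis card_Diff_subset le_add_diff_inverse card_mono psubset_imp_subset)
      have cS: "card S > 0" using Sne fS by auto
      have cS': "card S' > 0" using S'ne finU0 unfolding S'_def by auto
      define L0 where "L0 = log 2 (real (card U0))"
      define L1 where "L1 = log 2 (real (card S))"
      define L2 where "L2 = log 2 (real (card S'))"
      define b0 where "b0 = real (boundary V m U0)"
      define b1 where "b1 = real (boundary V m S)"
      define b2 where "b2 = real (boundary V m S')"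
      define c where "c = real (boundary U0 m S)"
      have ll: "d1 * (L1 - L0) + d2 * (L2 - L0) \<le> - min d1 d2"
        using log_lemma[OF cS cS' d1p d2p] unfolding L0_def L1_def L2_def cardsum by simp
      have m1: "d1 * F U0 \<le> d1 * F S" using U0min[OF SC] d1p by simp
      have m2: "d2 * F U0 \<le> d2 * F S'" using U0min[OF S'C] d2p by simp
      have e1: "d1 * F S = 2 * phistar * d1 * L1 + (b1 - real k / 10)"
        unfolding F_def L1_def b1_def d1_def[symmetric] using d1p by (simp add: field_simps)
      have e2: "d2 * F S' = 2 * phistar * d2 * L2 + (b2 - real k / 10)"
        unfolding F_def L2_def b2_def d2_def[symmetric] using d2p by (simp add: field_simps)
      have e0: "D * F U0 = 2 * phistar * D * L0 + (b0 - real k / 10)"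
        unfolding F_def L0_def b0_def D_def[symmetric] using Dpos by (simp add: field_simps)
      have bs': "b1 + b2 = b0 + 2 * c" using bs unfolding b0_def b1_def b2_def c_def S'_def .
      have "D * F U0 \<le> 2 * phistar * d1 * L1 + 2 * phistar * d2 * L2 + b1 + b2 - real k / 5"
        using m1 m2 e1 e2 Dsum by (simp add: algebra_simps)
      hence "0 \<le> 2 * phistar * (d1 * (L1 - L0) + d2 * (L2 - L0)) + 2 * c - real k / 10"
        using e0 bs' Dsum by (simp add: algebra_simps)
      also have "\<dots> \<le> 2 * phistar * (- min d1 d2) + 2 * c - real k / 10"
        using mult_left_mono[OF ll, of "2 * phistar"] assms(5) by simp
      finally have "real k / 10 + 2 * phistar * min d1 d2 \<le> 2 * c" by simp
      moreover have "c < real k / 20 + phistar * min d1 d2"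
        using small unfolding c_def d1_def d2_def S'_def .
      ultimately show False by simp
    qed
    show False
    proof (cases "dense V m U0 (1/4)")
      case False
      then obtain v where vU: "v \<in> U0" and vlow: "real (deg U0 m v) < 1/4 * real (deg V m v)"
        unfolding dense_def by (auto simp: not_le)
      define W where "W = U0 - {v}"
      have cW: "card W = card U0 - 1" unfolding W_def using vU finU0 by simp
      have "card W \<ge> 1" using cW c2 by simp
      hence Wne: "W \<noteq> {}" by auto
      have WC: "W \<in> C" using Wne U0V unfolding W_def C_def by auto
      define dl where "dl = real (deg V m v)"
      define du where "du = real (deg U0 m v)"
      define N0 where "N0 = real (boundary V m U0) - real k / 10"
      have brn: "boundary V m W + deg V m v = boundary V m U0 + 2 * deg U0 m v"
        using bnd_remove[OF fin sym loop vU U0V] unfolding W_def .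
      have br: "real (boundary V m W) = real (boundary V m U0) + 2 * du - dl"
        using arg_cong[OF brn, of real] unfolding du_def dl_def by simp
      have vr: "real (vol V m W) = D - dl"
        using vol_split[OF finU0, of "{v}" V m] vU unfolding W_def D_def dl_def vol_def by simp
      have dWp: "D - dl > 0" using volpos[OF Wne] U0V vr unfolding W_def by auto
      have N0h: "N0 \<le> D / 2" using P0 Dpos unfolding N0_def by (simp add: divide_less_eq)
      have dlp: "dl > 0" unfolding dl_def using degpos vU U0V by auto
      have PW: "(real (boundary V m W) - real k / 10) / real (vol V m W) \<le> N0 / D"
      proof -
        have "real (boundary V m W) - real k / 10 = N0 + 2 * du - dl" using br unfolding N0_def by simp
        also have "\<dots> \<le> N0 - dl / 2" using vlow unfolding du_def dl_def by simp
        finally have num: "real (boundary V m W) - real k / 10 \<le> N0 - dl / 2" .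
        have h: "N0 * dl \<le> D/2 * dl" using mult_right_mono[OF N0h, of dl] dlp by simp
        have h1: "(N0 - dl/2) * D = N0 * D - D/2 * dl" by (simp add: algebra_simps)
        have h2: "N0 * (D - dl) = N0 * D - N0 * dl" by (simp add: algebra_simps)
        have "(N0 - dl/2) * D \<le> N0 * (D - dl)" by (smt (verit) h h1 h2)
        hence "(N0 - dl/2) / (D - dl) \<le> N0 / D" using Dpos dWp by (simp add: divide_le_eq le_divide_eq mult.commute)
        moreover have "(real (boundary V m W) - real k / 10) / (D - dl) \<le> (N0 - dl/2) / (D - dl)"
          using num dWp by (simp add: divide_right_mono)
        ultimately show ?thesis using vr by simp
      qed
      have "log 2 (real (card W)) < log 2 (real (card U0))"
        using cW c2 by simp
      hence "2 * phistar * log 2 (real (card W)) < 2 * phistar * log 2 (real (card U0))"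
        using assms(5) by simp
      hence "F W < F U0" unfolding F_def using PW unfolding N0_def D_def by linarith
      thus False using U0min[OF WC] by simp
    next
      case dense: True
      show False
      proof (cases "edge_connected U0 m (real k / 20)")
        case False
        then obtain S where "S \<noteq> {}" "S \<subset> U0" "real (boundary U0 m S) < real k / 20"
          unfolding edge_connected_def by (auto simp: not_le)
        thus False using cut[of S] assms(5) by (smt (verit) min_def of_nat_0_le_iff mult_nonneg_nonneg)
      next
        case True
        have "conductance U0 m < phistar" using assms(6) U0V c2 dense True by blast
        define Cs where "Cs = {S. S \<noteq> {} \<and> S \<subset> U0}"
        define g where "g S = real (boundary U0 m S) / real (min (vol U0 m S) (vol U0 m (U0 - S)))" for S
        obtain v where vU: "v \<in> U0" using U0ne by auto
        have "{v} \<in> Cs" unfolding Cs_def using c2 vU by auto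
        moreover have "finite Cs" unfolding Cs_def using finU0 by (auto intro: finite_subset[of _ "Pow U0"])
        ultimately have "Min (g ` Cs) \<in> g ` Cs" by (intro Min_in) auto
        then obtain S where SCs: "S \<in> Cs" and gS: "g S = Min (g ` Cs)" by auto
        have "g S < phistar" using gS \<open>conductance U0 m < phistar\<close> unfolding conductance_def g_def Cs_def by simp
        have Sne: "S \<noteq> {}" and SU: "S \<subset> U0" using SCs unfolding Cs_def by auto
        have volUpos: "real (vol U0 m X) > 0" if XX: "X \<noteq> {}" "X \<subseteq> U0" for X
        proof -
          obtain w where w: "w \<in> X" using XX by auto
          have fX: "finite X" using finU0 XX finite_subset by blast
          have "deg U0 m w \<le> vol U0 m X" unfolding vol_def
            using member_le_sum[OF w, of "deg U0 m"] fX by simp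
          moreover have "real (deg U0 m w) \<ge> 1/4 * real (deg V m w)" using dense w XX unfolding dense_def by auto
          moreover have "real (deg V m w) > 0" using degpos[of w] w XX U0V by blast
          ultimately show ?thesis by linarith
        qed
        define mn where "mn = real (min (vol U0 m S) (vol U0 m (U0 - S)))"
        have mnp: "mn > 0" unfolding mn_def using volUpos[of S] volUpos[of "U0 - S"] Sne SU by auto
        have "real (boundary U0 m S) < phistar * mn"
          using \<open>g S < phistar\<close> mnp unfolding g_def mn_def[symmetric] by (simp add: divide_less_eq)
        moreover have "mn \<le> min (real (vol V m S)) (real (vol V m (U0 - S)))"
          unfolding mn_def using vol_mono[OF fin U0V, of m S] vol_mono[OF fin U0V, of m "U0 - S"] by auto
        ultimately have "real (boundary U0 m S) < real k / 20 + phistar * min (real (vol V m S)) (real (vol V m (U0 - S)))"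
        proof -
          have "phistar * mn \<le> phistar * min (real (vol V m S)) (real (vol V m (U0 - S)))"
            using \<open>mn \<le> _\<close> assms(5) by (intro mult_left_mono) auto
          moreover have "real k / 20 \<ge> 0" by simp
          ultimately show ?thesis using \<open>real (boundary U0 m S) < phistar * mn\<close> by linarith
        qed
        thus False using cut Sne SU by blast
      qed
    qed
  qed
  show ?thesis
  proof (intro allI impI)
    fix U assume U: "U \<noteq> {} \<and> U \<subseteq> V"
    hence UC: "U \<in> C" unfolding C_def by auto
    have vp: "real (vol V m U) > 0" using volpos U by auto
    have "cond_set V m U \<ge> (real (boundary V m U) - real k / 10) / real (vol V m U)"
      unfolding cond_set_def using vp by (simp add: divide_right_mono)
    hence "2 * phistar * log 2 (real (card U)) + cond_set V m U \<ge> 3/10"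
      using key U0min[OF UC] unfolding F_def by linarith
    thus "log 2 (real (card U)) \<ge> (3/10 - cond_set V m U) / (2 * phistar)"
      using assms(5) by (simp add: divide_le_eq mult.commute)
  qed
qed

end
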